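(* Let $\boldsymbol{A},\boldsymbol{B}\in\mathsf{PSL}$ and let $\mathbb{X},\mathbb{Y}$ be posets. (i) If $f\colon\boldsymbol{A}\to\boldsymbol{B}$ is a homomorphism, then $f_\ast\colon\boldsymbol{B}_\ast\rightharpoonup\boldsymbol{A}_\ast$ is a partial negative p-morphism. (ii) If $p\colon\mathbb{X}\rightharpoonup\mathbb{Y}$ is a partial negative p-morphism, then $\mathsf{Up}_{\mathsf{PSL}}(p)\colon\mathsf{Up}_{\mathsf{PSL}}(\mathbb{Y})\to\mathsf{Up}_{\mathsf{PSL}}(\mathbb{X})$ is a homomorphism.
   Context: $\mathsf{PSL}$ is the class of pseudocomplemented semilattices $\langle A;\land,\lnot,0,1\rangle$: $\langle A;\land\rangle$ is a semilattice (order $a\le b$ iff $a\land b=a$) with minimum $0$ and maximum $1$, and $c\land a=0\iff c\le\lnot a$ for all $a,c$. A filter of $\boldsymbol{A}$ is a nonempty upset closed under $\land$; it is meet irreducible if proper and not the intersection of two filters both different from it; $\boldsymbol{A}_\ast$ is the poset of meet irreducible filters under inclusion. A partial function $p\colon X\rightharpoonup Y$ is a function from $\mathsf{dom}(p)\subseteq X$ to $Y$; between posets it is order preserving if $x\le z$ in $\mathsf{dom}(p)$ implies $p(x)\le p(z)$. An order preserving $p\colon\mathbb{X}\rightharpoonup\mathbb{Y}$ is a partial negative p-morphism if $X={\downarrow}\{x\in X:{\uparrow}x\subseteq\mathsf{dom}(p)\}$ and whenever $x\in\mathsf{dom}(p)$, $y\in Y$, $p(x)\le y$, there is $z\in\mathsf{dom}(p)$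 with $x\le z$ and $y\le p(z)$. For a homomorphism $f$, $f_\ast$ has domain $\{F\in\boldsymbol{B}_\ast: f^{-1}[F]\in\boldsymbol{A}_\ast\}$ and $f_\ast(F)=f^{-1}[F]$. For a poset $\mathbb{X}$, $\mathsf{Up}_{\mathsf{PSL}}(\mathbb{X})=\langle\mathsf{Up}(\mathbb{X});\cap,\lnot,\emptyset,X\rangle$ where $\mathsf{Up}(\mathbb{X})$ is the set of upsets and $\lnot U = X\smallsetminus{\downarrow}U$; and $\mathsf{Up}_{\mathsf{PSL}}(p)(U)=X\smallsetminus{\downarrow}p^{-1}[Y\smallsetminus U]$. *)

theory Defs
  imports Main
begin

record 'a psl =
  pcar  :: "'a set"
  pmeet :: "'a \<Rightarrow> 'a \<Rightarrow> 'a"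
  pneg  :: "'a \<Rightarrow> 'a"
  pzero :: 'a
  pone  :: 'a

definition psl_le :: "'a psl \<Rightarrow> 'a \<Rightarrow> 'a \<Rightarrow> bool" where
  "psl_le A a b \<longleftrightarrow> pmeet A a b = a"

definition is_psl :: "'a psl \<Rightarrow> bool" where
  "is_psl A \<longleftrightarrow>
     (\<forall>a\<in>pcar A. \<forall>b\<in>pcar A. pmeet A a b \<in> pcar A) \<and>
     (\<forall>a\<in>pcar A. pneg A a \<in> pcar A) \<and>
     pzero A \<in> pcar A \<and> pone A \<in> pcar A \<and>
     (\<forall>a\<in>pcar A. pmeet A a a = a) \<and>
     (\<forall>a\<in>pcar A. \<forall>b\<in>pcar A. pmeet A a b = pmeet A b a) \<and>
     (\<forall>a\<in>pcar A. \<forall>b\<in>pcar A. \<forall>c\<in>pcar A.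
        pmeet A (pmeet A a b) c = pmeet A a (pmeet A b c)) \<and>
     (\<forall>a\<in>pcar A. psl_le A (pzero A) a \<and> psl_le A a (pone A)) \<and>
     (\<forall>a\<in>pcar A. \<forall>c\<in>pcar A. pmeet A c a = pzero A \<longleftrightarrow> psl_le A c (pneg A a))"

definition psl_hom :: "'a psl \<Rightarrow> 'b psl \<Rightarrow> ('a \<Rightarrow> 'b) \<Rightarrow> bool" where
  "psl_hom A B f \<longleftrightarrow>
     (\<forall>a\<in>pcar A. f a \<in> pcar B) \<and>
     (\<forall>a\<in>pcar A. \<forall>b\<in>pcar A. f (pmeet A a b) = pmeet B (f a) (f b)) \<and>
     (\<forall>a\<in>pcar A. f (pneg A a) = pneg B (f a)) \<and>
     f (pzero A) = pzero B \<and> f (pone A) = pone B"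

definition is_filter :: "'a psl \<Rightarrow> 'a set \<Rightarrow> bool" where
  "is_filter A F \<longleftrightarrow> F \<subseteq> pcar A \<and> F \<noteq> {} \<and>
     (\<forall>a\<in>F. \<forall>b\<in>pcar A. psl_le A a b \<longrightarrow> b \<in> F) \<and>
     (\<forall>a\<in>F. \<forall>b\<in>F. pmeet A a b \<in> F)"

definition mi_filter :: "'a psl \<Rightarrow> 'a set \<Rightarrow> bool" where
  "mi_filter A F \<longleftrightarrow> is_filter A F \<and> F \<noteq> pcar A \<and>
     \<not> (\<exists>G H. is_filter A G \<and> is_filter A H \<and> G \<noteq> F \<and> H \<noteq> F \<and> F = G \<inter> H)"

text \<open>The poset A_* : the set of meet irreducible filters (ordered by inclusion).\<close>
definition mi_filters :: "'a psl \<Rightarrow> 'a set set" where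
  "mi_filters A = {F. mi_filter A F}"

definition lower_star :: "'a psl \<Rightarrow> 'b psl \<Rightarrow> ('a \<Rightarrow> 'b) \<Rightarrow> 'b set \<Rightarrow> 'a set option" where
  "lower_star A B f F =
     (if F \<in> mi_filters B \<and> {a \<in> pcar A. f a \<in> F} \<in> mi_filters A
      then Some {a \<in> pcar A. f a \<in> F} else None)"

definition is_poset :: "'x set \<Rightarrow> ('x \<Rightarrow> 'x \<Rightarrow> bool) \<Rightarrow> bool" where
  "is_poset X le \<longleftrightarrow> (\<forall>x\<in>X. le x x) \<and>
     (\<forall>x\<in>X. \<forall>y\<in>X. le x y \<and> le y x \<longrightarrow> x = y) \<and>
     (\<forall>x\<in>X. \<forall>y\<in>X. \<forall>z\<in>X. le x y \<and> le y z \<longrightarrow> le x z)"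

definition down :: "'x set \<Rightarrow> ('x \<Rightarrow> 'x \<Rightarrow> bool) \<Rightarrow> 'x set \<Rightarrow> 'x set" where
  "down X le S = {x\<in>X. \<exists>s\<in>S. le x s}"

definition up :: "'x set \<Rightarrow> ('x \<Rightarrow> 'x \<Rightarrow> bool) \<Rightarrow> 'x set \<Rightarrow> 'x set" where
  "up X le S = {x\<in>X. \<exists>s\<in>S. le s x}"

definition is_upset :: "'x set \<Rightarrow> ('x \<Rightarrow> 'x \<Rightarrow> bool) \<Rightarrow> 'x set \<Rightarrow> bool" where
  "is_upset X le U \<longleftrightarrow> U \<subseteq> X \<and> (\<forall>u\<in>U. \<forall>x\<in>X. le u x \<longrightarrow> x \<in> U)"

definition partial_neg_pmorphism ::
  "'x set \<Rightarrow> ('x \<Rightarrow> 'x \<Rightarrow> bool) \<Rightarrow> 'y set \<Rightarrow> ('y \<Rightarrow> 'y \<Rightarrow> bool) \<Rightarrow> ('x \<Rightarrow> 'y option) \<Rightarrow> bool" where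
  "partial_neg_pmorphism X leX Y leY p \<longleftrightarrow>
     dom p \<subseteq> X \<and> (\<forall>x\<in>dom p. the (p x) \<in> Y) \<and>
     (\<forall>x\<in>dom p. \<forall>z\<in>dom p. leX x z \<longrightarrow> leY (the (p x)) (the (p z))) \<and>
     X = down X leX {x\<in>X. up X leX {x} \<subseteq> dom p} \<and>
     (\<forall>x\<in>dom p. \<forall>y\<in>Y. leY (the (p x)) y \<longrightarrow>
        (\<exists>z\<in>dom p. leX x z \<and> leY y (the (p z))))"

definition up_psl :: "'x set \<Rightarrow> ('x \<Rightarrow> 'x \<Rightarrow> bool) \<Rightarrow> 'x set psl" where
  "up_psl X le = \<lparr> pcar = {U. is_upset X le U}, pmeet = (\<inter>),
      pneg = (\<lambda>U. X - down X le U), pzero = {}, pone = X \<rparr>"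

definition up_map ::
  "'x set \<Rightarrow> ('x \<Rightarrow> 'x \<Rightarrow> bool) \<Rightarrow> 'y set \<Rightarrow> ('x \<Rightarrow> 'y option) \<Rightarrow> 'y set \<Rightarrow> 'x set" where
  "up_map X leX Y p U = X - down X leX {x\<in>X. \<exists>y. p x = Some y \<and> y \<in> Y - U}"

end

theory Submission
  imports Defs
begin

definition maxf :: "'a psl \<Rightarrow> 'a set \<Rightarrow> bool" where "maxf A M \<longleftrightarrow> is_filter A M \<and> pzero A \<notin> M \<and> (\<forall>a\<in>pcar A. a \<in> M \<or> pneg A a \<in> M)"

context
  fixes A :: "'a psl"
  assumes P: "is_psl A"
begin

lemma mc: "a \<in> pcar A \<Longrightarrow> b \<in> pcar A \<Longrightarrow> pmeet A a b \<in> pcar A"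
  using P unfolding is_psl_def by blast
lemma nc: "a \<in> pcar A \<Longrightarrow> pneg A a \<in> pcar A"
  using P unfolding is_psl_def by blast
lemma zc: "pzero A \<in> pcar A" using P unfolding is_psl_def by blast
lemma oc: "pone A \<in> pcar A" using P unfolding is_psl_def by blast

lemma ple_refl: "a \<in> pcar A \<Longrightarrow> psl_le A a a"
  using P unfolding is_psl_def psl_le_def by blast

lemma ple_trans: "a \<in> pcar A \<Longrightarrow> b \<in> pcar A \<Longrightarrow> c \<in> pcar A \<Longrightarrow> psl_le A a b \<Longrightarrow> psl_le A b c \<Longrightarrow> psl_le A a c"
  using P unfolding is_psl_def psl_le_def by metis

lemma lb1: "a \<in> pcar A \<Longrightarrow> b \<in> pcar A \<Longrightarrow> psl_le A (pmeet A a b) a"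
  using P unfolding is_psl_def psl_le_def by metis

lemma lb2: "a \<in> pcar A \<Longrightarrow> b \<in> pcar A \<Longrightarrow> psl_le A (pmeet A a b) b"
  using P unfolding is_psl_def psl_le_def by metis

lemma glb: "x \<in> pcar A \<Longrightarrow> a \<in> pcar A \<Longrightarrow> b \<in> pcar A \<Longrightarrow> psl_le A x a \<Longrightarrow> psl_le A x b \<Longrightarrow> psl_le A x (pmeet A a b)"
  using P unfolding is_psl_def psl_le_def by metis

lemma meet_mono: "a \<in> pcar A \<Longrightarrow> b \<in> pcar A \<Longrightarrow> a' \<in> pcar A \<Longrightarrow> b' \<in> pcar A \<Longrightarrow> psl_le A a a' \<Longrightarrow> psl_le A b b' \<Longrightarrow> psl_le A (pmeet A a b) (pmeet A a' b')"
proof -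
  assume c: "a \<in> pcar A" "b \<in> pcar A" "a' \<in> pcar A" "b' \<in> pcar A" and l: "psl_le A a a'" "psl_le A b b'"
  have m: "pmeet A a b \<in> pcar A" using mc c by blast
  have "psl_le A (pmeet A a b) a'" using ple_trans[OF m c(1) c(3) lb1[OF c(1,2)] l(1)] .
  moreover have "psl_le A (pmeet A a b) b'" using ple_trans[OF m c(2) c(4) lb2[OF c(1,2)] l(2)] .
  ultimately show ?thesis using glb m c by blast
qed

lemma pzero_le: "a \<in> pcar A \<Longrightarrow> psl_le A (pzero A) a"
  using P unfolding is_psl_def by blast

lemma ple_one: "a \<in> pcar A \<Longrightarrow> psl_le A a (pone A)"
  using P unfolding is_psl_def by blast

lemma ple_zero: "a \<in> pcar A \<Longrightarrow> psl_le A a (pzero A) \<Longrightarrow> a = pzero A"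
  using P unfolding is_psl_def psl_le_def by metis

lemma pc: "a \<in> pcar A \<Longrightarrow> c \<in> pcar A \<Longrightarrow> pmeet A c a = pzero A \<longleftrightarrow> psl_le A c (pneg A a)"
  using P unfolding is_psl_def by blast

lemma meet_neg: "a \<in> pcar A \<Longrightarrow> pmeet A a (pneg A a) = pzero A"
  using P unfolding is_psl_def psl_le_def by metis



lemma filter_one: "is_filter A M \<Longrightarrow> pone A \<in> M"
  unfolding is_filter_def using ple_one oc by blast

lemma filter_zero: "is_filter A G \<Longrightarrow> pzero A \<in> G \<Longrightarrow> G = pcar A"
  unfolding is_filter_def using pzero_le by blast

lemma maxf_above: "maxf A M \<Longrightarrow> is_filter A G \<Longrightarrow> M \<subseteq> G \<Longrightarrow> G \<noteq> M \<Longrightarrow> G = pcar A"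
proof -
  assume m: "maxf A M" and g: "is_filter A G" "M \<subseteq> G" "G \<noteq> M"
  then obtain a where a: "a \<in> G" "a \<notin> M" by blast
  have ac: "a \<in> pcar A" using a g unfolding is_filter_def by blast
  then have "pneg A a \<in> G" using m a g unfolding maxf_def by blast
  then have "pmeet A a (pneg A a) \<in> G" using a g unfolding is_filter_def by blast
  then have "pzero A \<in> G" using meet_neg ac by simp
  then show ?thesis using filter_zero g by blast
qed

lemma maxf_mi: "maxf A M \<Longrightarrow> mi_filter A M"
proof -
  assume m: "maxf A M"
  have "M \<noteq> pcar A" using m zc unfolding maxf_def by blast
  moreover have "\<not> (\<exists>G H. is_filter A G \<and> is_filter A H \<and> G \<noteq> M \<and> H \<noteq> M \<and> M = G \<inter> H)"
  proof
    assume "\<exists>G H. is_filter A G \<and> is_filter A H \<and> G \<noteq> M \<and> H \<noteq> M \<and> M = G \<inter> H"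
    then obtain G H where "is_filter A G" "is_filter A H" "G \<noteq> M" "H \<noteq> M" "M = G \<inter> H" by blast
    then have "G = pcar A" "H = pcar A" using maxf_above[OF m] by auto
    then show False using \<open>M \<noteq> pcar A\<close> \<open>M = G \<inter> H\<close> by simp
  qed
  ultimately show ?thesis using m unfolding mi_filter_def maxf_def by blast
qed

lemma maxf_top: "maxf A M \<Longrightarrow> mi_filter A N \<Longrightarrow> M \<subseteq> N \<Longrightarrow> N = M"
  using maxf_above unfolding mi_filter_def by blast

lemma ext_maxf: assumes g: "is_filter A G" "pzero A \<notin> G" shows "\<exists>M. maxf A M \<and> G \<subseteq> M"
proof -
  let ?P = "{H. is_filter A H \<and> pzero A \<notin> H \<and> G \<subseteq> H}"
  have "\<forall>C\<in>chains ?P. \<exists>U\<in>?P. \<forall>X\<in>C. X \<subseteq> U"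
  proof
    fix C assume C: "C \<in> chains ?P"
    show "\<exists>U\<in>?P. \<forall>X\<in>C. X \<subseteq> U"
    proof (cases "C = {}")
      case True then show ?thesis using g by auto
    next
      case False
      have sub: "C \<subseteq> ?P" using chainsD2[OF C] .
      have "is_filter A (\<Union>C)"
        unfolding is_filter_def
      proof (intro conjI ballI impI)
        show "\<Union>C \<subseteq> pcar A" using sub unfolding is_filter_def by blast
        show "\<Union>C \<noteq> {}" using sub False unfolding is_filter_def by blast
        fix a b assume "a \<in> \<Union>C" "b \<in> pcar A" "psl_le A a b"
        then show "b \<in> \<Union>C" using sub unfolding is_filter_def by blast
      next
        fix a b assume a: "a \<in> \<Union>C" and b: "b \<in> \<Union>C"
        then obtain X Y where X: "X \<in> C" "a \<in> X" and Y: "Y \<in> C" "b \<in> Y" by blast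
        then have "X \<subseteq> Y \<or> Y \<subseteq> X" using chainsD[OF C] by blast
        then show "pmeet A a b \<in> \<Union>C" using X Y sub unfolding is_filter_def by blast
      qed
      moreover have "pzero A \<notin> \<Union>C" "G \<subseteq> \<Union>C" using sub False by auto
      ultimately show ?thesis by blast
    qed
  qed
  from Zorn_Lemma2[OF this] obtain M where M: "M \<in> ?P" and mx: "\<forall>X\<in>?P. M \<subseteq> X \<longrightarrow> X = M" by blast
  have "\<forall>a\<in>pcar A. a \<in> M \<or> pneg A a \<in> M"
  proof (intro ballI)
    fix a assume ac: "a \<in> pcar A"
    show "a \<in> M \<or> pneg A a \<in> M"
    proof (rule ccontr)
      assume na: "\<not> (a \<in> M \<or> pneg A a \<in> M)"
      have Mf: "is_filter A M" "pzero A \<notin> M" "G \<subseteq> M" using M by auto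
      let ?H = "{b \<in> pcar A. \<exists>c\<in>M. psl_le A (pmeet A c a) b}"
      have Mc: "M \<subseteq> pcar A" using Mf unfolding is_filter_def by blast
      have Hf: "is_filter A ?H"
        unfolding is_filter_def
      proof (intro conjI ballI impI)
        show "?H \<subseteq> pcar A" by blast
        obtain c where "c \<in> M" using Mf unfolding is_filter_def by blast
        then have "pmeet A c a \<in> ?H" using Mc ac mc ple_refl by blast
        then show "?H \<noteq> {}" by blast
      next
        fix x b assume x: "x \<in> ?H" "b \<in> pcar A" "psl_le A x b"
        then obtain c where "c \<in> M" "psl_le A (pmeet A c a) x" by blast
        then show "b \<in> ?H" using x ple_trans[of "pmeet A c a" x b] Mc ac mc by blast
      next
        fix x b assume x: "x \<in> ?H" and b: "b \<in> ?H"
        then obtain c d where c: "c \<in> M" "psl_le A (pmeet A c a) x" and d: "d \<in> M" "psl_le A (pmeet A d a) b" by blast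
        have cc: "c \<in> pcar A" "d \<in> pcar A" "x \<in> pcar A" "b \<in> pcar A" using c d x b Mc by auto
        have cd: "pmeet A c d \<in> M" using c d Mf unfolding is_filter_def by blast
        have e: "pmeet A (pmeet A c d) a \<in> pcar A" using cc mc ac by blast
        have "psl_le A (pmeet A (pmeet A c d) a) (pmeet A c a)"
          using meet_mono[OF _ ac _ ac lb1 ple_refl[OF ac]] cc mc by blast
        then have 1: "psl_le A (pmeet A (pmeet A c d) a) x" using ple_trans[OF e _ _ _ c(2)] cc ac mc by blast
        have "psl_le A (pmeet A (pmeet A c d) a) (pmeet A d a)"
          using meet_mono[OF _ ac _ ac lb2 ple_refl[OF ac]] cc mc by blast
        then have 2: "psl_le A (pmeet A (pmeet A c d) a) b" using ple_trans[OF e _ _ _ d(2)] cc ac mc by blast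
        have "psl_le A (pmeet A (pmeet A c d) a) (pmeet A x b)" using glb[OF e _ _ 1 2] cc by blast
        then show "pmeet A x b \<in> ?H" using cd cc mc by blast
      qed
      have "M \<subseteq> ?H"
      proof
        fix b assume "b \<in> M"
        then show "b \<in> ?H" using Mc lb1 ac by blast
      qed
      moreover have "a \<in> ?H" using Mf Mc lb2 ac unfolding is_filter_def by blast
      ultimately have "?H \<notin> ?P" using mx na by blast
      then have "pzero A \<in> ?H" using Hf \<open>M \<subseteq> ?H\<close> Mf by blast
      then obtain c where c: "c \<in> M" "psl_le A (pmeet A c a) (pzero A)" by blast
      then have "pmeet A c a = pzero A" using ple_zero mc ac Mc by blast
      then have "psl_le A c (pneg A a)" using pc ac Mc c by blast
      then have "pneg A a \<in> M" using Mf c nc ac unfolding is_filter_def by blast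
      then show False using na by blast
    qed
  qed
  then show ?thesis using M unfolding maxf_def by blast
qed

end

lemma hom_le: "psl_hom A B f \<Longrightarrow> a \<in> pcar A \<Longrightarrow> b \<in> pcar A \<Longrightarrow> psl_le A a b \<Longrightarrow> psl_le B (f a) (f b)"
  unfolding psl_hom_def psl_le_def by metis

lemma pre_maxf:
  assumes PA: "is_psl A" and PB: "is_psl B" and h: "psl_hom A B f" and m: "maxf B M"
  shows "maxf A {a \<in> pcar A. f a \<in> M}"
proof -
  have Mf: "is_filter B M" "pzero B \<notin> M" "\<forall>b\<in>pcar B. b \<in> M \<or> pneg B b \<in> M" using m unfolding maxf_def by auto
  have fc: "\<forall>a\<in>pcar A. f a \<in> pcar B" using h unfolding psl_hom_def by blast
  have "is_filter A {a \<in> pcar A. f a \<in> M}"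
    unfolding is_filter_def
  proof (intro conjI ballI impI)
    show "{a \<in> pcar A. f a \<in> M} \<subseteq> pcar A" by blast
    have "pone A \<in> pcar A" using oc[OF PA] .
    moreover have "f (pone A) \<in> M" using h filter_one[OF PB Mf(1)] unfolding psl_hom_def by simp
    ultimately show "{a \<in> pcar A. f a \<in> M} \<noteq> {}" by blast
  next
    fix a b assume "a \<in> {a \<in> pcar A. f a \<in> M}" "b \<in> pcar A" "psl_le A a b"
    then show "b \<in> {a \<in> pcar A. f a \<in> M}" using hom_le[OF h] fc Mf(1) unfolding is_filter_def by blast
  next
    fix a b assume "a \<in> {a \<in> pcar A. f a \<in> M}" "b \<in> {a \<in> pcar A. f a \<in> M}"
    then show "pmeet A a b \<in> {a \<in> pcar A. f a \<in> M}" using h Mf(1) mc[OF PA] unfolding is_filter_def psl_hom_def by auto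
  qed
  moreover have "pzero A \<notin> {a \<in> pcar A. f a \<in> M}" using h Mf(2) unfolding psl_hom_def by auto
  moreover have "\<forall>a\<in>pcar A. a \<in> {a \<in> pcar A. f a \<in> M} \<or> pneg A a \<in> {a \<in> pcar A. f a \<in> M}"
    using h Mf(3) nc[OF PA] unfolding psl_hom_def by auto
  ultimately show ?thesis unfolding maxf_def by blast
qed

lemma dom_ls: "dom (lower_star A B f) = {F. F \<in> mi_filters B \<and> {a \<in> pcar A. f a \<in> F} \<in> mi_filters A}"
  unfolding lower_star_def dom_def by auto

lemma part1:
  assumes PA: "is_psl A" and PB: "is_psl B" and h: "psl_hom A B f"
  shows "partial_neg_pmorphism (mi_filters B) (\<subseteq>) (mi_filters A) (\<subseteq>) (lower_star A B f)"
proof -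
  have fc: "\<forall>a\<in>pcar A. f a \<in> pcar B" using h unfolding psl_hom_def by blast
  have maxdom: "M \<in> dom (lower_star A B f)" if "maxf B M" for M
    using maxf_mi[OF PB that] maxf_mi[OF PA pre_maxf[OF PA PB h that]] unfolding dom_ls mi_filters_def by auto
  have th: "the (lower_star A B f F) = {a \<in> pcar A. f a \<in> F}" if "F \<in> dom (lower_star A B f)" for F
    using that unfolding dom_ls lower_star_def by auto
  have c4: "mi_filters B = down (mi_filters B) (\<subseteq>) {x \<in> mi_filters B. up (mi_filters B) (\<subseteq>) {x} \<subseteq> dom (lower_star A B f)}"
  proof
    show "down (mi_filters B) (\<subseteq>) {x \<in> mi_filters B. up (mi_filters B) (\<subseteq>) {x} \<subseteq> dom (lower_star A B f)} \<subseteq> mi_filters B"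
      unfolding down_def by blast
    show "mi_filters B \<subseteq> down (mi_filters B) (\<subseteq>) {x \<in> mi_filters B. up (mi_filters B) (\<subseteq>) {x} \<subseteq> dom (lower_star A B f)}"
    proof
      fix F assume F: "F \<in> mi_filters B"
      then have "is_filter B F" "F \<noteq> pcar B" unfolding mi_filters_def mi_filter_def by auto
      then have "pzero B \<notin> F" using filter_zero[OF PB] by blast
      then obtain M where M: "maxf B M" "F \<subseteq> M" using ext_maxf[OF PB \<open>is_filter B F\<close>] by blast
      have "M \<in> mi_filters B" using maxf_mi[OF PB M(1)] unfolding mi_filters_def by simp
      moreover have "up (mi_filters B) (\<subseteq>) {M} \<subseteq> dom (lower_star A B f)"
        unfolding up_def mi_filters_def using maxf_top[OF PB M(1)] maxdom[OF M(1)] by auto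
      ultimately show "F \<in> down (mi_filters B) (\<subseteq>) {x \<in> mi_filters B. up (mi_filters B) (\<subseteq>) {x} \<subseteq> dom (lower_star A B f)}"
        unfolding down_def using F M(2) by blast
    qed
  qed
  have c5: "\<forall>x\<in>dom (lower_star A B f). \<forall>y\<in>mi_filters A. the (lower_star A B f x) \<subseteq> y \<longrightarrow>
        (\<exists>z\<in>dom (lower_star A B f). x \<subseteq> z \<and> y \<subseteq> the (lower_star A B f z))"
  proof (intro ballI impI)
    fix F y assume Fd: "F \<in> dom (lower_star A B f)" and y: "y \<in> mi_filters A"
      and sub0: "the (lower_star A B f F) \<subseteq> y"
    have sub: "{a \<in> pcar A. f a \<in> F} \<subseteq> y" using sub0 th[OF Fd] by simp
    have Ff: "is_filter B F" using Fd unfolding dom_ls mi_filters_def mi_filter_def by auto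
    have yf: "is_filter A y" "y \<noteq> pcar A" using y unfolding mi_filters_def mi_filter_def by auto
    have Fc: "F \<subseteq> pcar B" and yc: "y \<subseteq> pcar A" using Ff yf unfolding is_filter_def by auto
    let ?H = "{b \<in> pcar B. \<exists>c\<in>F. \<exists>a\<in>y. psl_le B (pmeet B c (f a)) b}"
    have Hf: "is_filter B ?H"
      unfolding is_filter_def
    proof (intro conjI ballI impI)
      show "?H \<subseteq> pcar B" by blast
      obtain c a where "c \<in> F" "a \<in> y" using Ff yf unfolding is_filter_def by blast
      then have "pmeet B c (f a) \<in> ?H" using Fc yc fc mc[OF PB] ple_refl[OF PB] by blast
      then show "?H \<noteq> {}" by blast
    next
      fix x b assume x: "x \<in> ?H" "b \<in> pcar B" "psl_le B x b"
      then obtain c a where "c \<in> F" "a \<in> y" "psl_le B (pmeet B c (f a)) x" by blast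
      then show "b \<in> ?H" using x ple_trans[OF PB, of "pmeet B c (f a)" x b] Fc yc fc mc[OF PB] by blast
    next
      fix x b assume x: "x \<in> ?H" and b: "b \<in> ?H"
      then obtain c a d a' where c: "c \<in> F" "a \<in> y" "psl_le B (pmeet B c (f a)) x"
        and d: "d \<in> F" "a' \<in> y" "psl_le B (pmeet B d (f a')) b" by blast
      have cc: "c \<in> pcar B" "d \<in> pcar B" "x \<in> pcar B" "b \<in> pcar B" "f a \<in> pcar B" "f a' \<in> pcar B"
        "a \<in> pcar A" "a' \<in> pcar A"
        using c d x b Fc yc fc by auto
      have cd: "pmeet B c d \<in> F" using c d Ff unfolding is_filter_def by blast
      have aa: "pmeet A a a' \<in> y" using c d yf unfolding is_filter_def by blast
      have fa: "f (pmeet A a a') = pmeet B (f a) (f a')" using h cc unfolding psl_hom_def by blast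
      let ?e = "pmeet B (pmeet B c d) (pmeet B (f a) (f a'))"
      have e: "?e \<in> pcar B" using cc mc[OF PB] by blast
      have l1: "psl_le B ?e (pmeet B c (f a))"
        using meet_mono[OF PB _ _ cc(1) cc(5) lb1[OF PB cc(1,2)] lb1[OF PB cc(5,6)]] cc mc[OF PB] by blast
      have l2: "psl_le B ?e (pmeet B d (f a'))"
        using meet_mono[OF PB _ _ cc(2) cc(6) lb2[OF PB cc(1,2)] lb2[OF PB cc(5,6)]] cc mc[OF PB] by blast
      have 1: "psl_le B ?e x" using ple_trans[OF PB e _ _ l1 c(3)] cc mc[OF PB] by blast
      have 2: "psl_le B ?e b" using ple_trans[OF PB e _ _ l2 d(3)] cc mc[OF PB] by blast
      have "psl_le B ?e (pmeet B x b)" using glb[OF PB e _ _ 1 2] cc by blast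
      then show "pmeet B x b \<in> ?H" using cd aa fa cc mc[OF PB] by (metis (mono_tags, lifting) mem_Collect_eq)
    qed
    have z: "pzero B \<notin> ?H"
    proof
      assume "pzero B \<in> ?H"
      then obtain c a where c: "c \<in> F" "a \<in> y" "psl_le B (pmeet B c (f a)) (pzero B)" by blast
      have cc: "c \<in> pcar B" "a \<in> pcar A" "f a \<in> pcar B" using c Fc yc fc by auto
      have "pmeet B c (f a) = pzero B" using ple_zero[OF PB] mc[OF PB] cc c by blast
      then have "psl_le B c (pneg B (f a))" using pc[OF PB] cc by blast
      moreover have "pneg B (f a) = f (pneg A a)" using h cc unfolding psl_hom_def by simp
      ultimately have "f (pneg A a) \<in> F" using Ff c cc nc[OF PA] fc unfolding is_filter_def by metis
      then have "pneg A a \<in> y" using sub nc[OF PA] cc by blast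
      then have "pmeet A a (pneg A a) \<in> y" using yf c unfolding is_filter_def by blast
      then have "pzero A \<in> y" using meet_neg[OF PA] cc by simp
      then show False using filter_zero[OF PA yf(1)] yf(2) by blast
    qed
    obtain M where M: "maxf B M" "?H \<subseteq> M" using ext_maxf[OF PB Hf z] by blast
    have FH: "F \<subseteq> ?H"
    proof
      fix c assume c: "c \<in> F"
      obtain a where "a \<in> y" using yf unfolding is_filter_def by blast
      then show "c \<in> ?H" using c Fc yc fc lb1[OF PB] by blast
    qed
    have yH: "y \<subseteq> {a \<in> pcar A. f a \<in> ?H}"
    proof
      fix a assume a: "a \<in> y"
      obtain c where "c \<in> F" using Ff unfolding is_filter_def by blast
      then show "a \<in> {a \<in> pcar A. f a \<in> ?H}" using a Fc yc fc lb2[OF PB] by blast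
    qed
    have Md: "M \<in> dom (lower_star A B f)" using maxdom[OF M(1)] .
    have "F \<subseteq> M" using FH M(2) by (rule subset_trans)
    moreover have "y \<subseteq> the (lower_star A B f M)"
      unfolding th[OF Md] using yH M(2) by auto
    ultimately show "\<exists>z\<in>dom (lower_star A B f). F \<subseteq> z \<and> y \<subseteq> the (lower_star A B f z)"
      using Md by blast
  qed
  have c1: "dom (lower_star A B f) \<subseteq> mi_filters B" unfolding dom_ls by blast
  have c2: "\<forall>x\<in>dom (lower_star A B f). the (lower_star A B f x) \<in> mi_filters A"
  proof
    fix x assume x: "x \<in> dom (lower_star A B f)"
    show "the (lower_star A B f x) \<in> mi_filters A" unfolding th[OF x] using x unfolding dom_ls by blast
  qed
  have c3: "\<forall>x\<in>dom (lower_star A B f). \<forall>z\<in>dom (lower_star A B f). x \<subseteq> z \<longrightarrow> the (lower_star A B f x) \<subseteq> the (lower_star A B f z)"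
  proof (intro ballI impI)
    fix x z assume x: "x \<in> dom (lower_star A B f)" and z: "z \<in> dom (lower_star A B f)" and xz: "x \<subseteq> z"
    show "the (lower_star A B f x) \<subseteq> the (lower_star A B f z)" unfolding th[OF x] th[OF z] using xz by blast
  qed
  show ?thesis unfolding partial_neg_pmorphism_def
    using c1 c2 c3 c4 c5 by blast
qed

lemma part2:
  assumes poX: "is_poset X leX" and poY: "is_poset Y leY" and pm: "partial_neg_pmorphism X leX Y leY p"
  shows "psl_hom (up_psl Y leY) (up_psl X leX) (up_map X leX Y p)"
proof -
  have trX: "\<And>x y z. x \<in> X \<Longrightarrow> y \<in> X \<Longrightarrow> z \<in> X \<Longrightarrow> leX x y \<Longrightarrow> leX y z \<Longrightarrow> leX x z"
    using poX unfolding is_poset_def by blast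
  have rfX: "\<And>x. x \<in> X \<Longrightarrow> leX x x" using poX unfolding is_poset_def by blast
  have pd: "dom p \<subseteq> X" and pY: "\<forall>x\<in>dom p. the (p x) \<in> Y"
    and mono: "\<forall>x\<in>dom p. \<forall>z\<in>dom p. leX x z \<longrightarrow> leY (the (p x)) (the (p z))"
    and c4: "X = down X leX {x\<in>X. up X leX {x} \<subseteq> dom p}"
    and c5: "\<forall>x\<in>dom p. \<forall>y\<in>Y. leY (the (p x)) y \<longrightarrow> (\<exists>z\<in>dom p. leX x z \<and> leY y (the (p z)))"
    using pm unfolding partial_neg_pmorphism_def by auto
  have ex4: "\<exists>x0\<in>X. leX x x0 \<and> (\<forall>x'\<in>X. leX x0 x' \<longrightarrow> x' \<in> dom p)" if "x \<in> X" for x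
  proof -
    have "x \<in> down X leX {x\<in>X. up X leX {x} \<subseteq> dom p}" using c4 that by blast
    then obtain x0 where "x0 \<in> X" "leX x x0" "up X leX {x0} \<subseteq> dom p" unfolding down_def by blast
    moreover have "\<forall>x'\<in>X. leX x0 x' \<longrightarrow> x' \<in> dom p" using calculation(3) unfolding up_def by blast
    ultimately show ?thesis by blast
  qed
  have um: "w \<in> up_map X leX Y p U \<longleftrightarrow> w \<in> X \<and> \<not> (\<exists>x\<in>X. leX w x \<and> (\<exists>y. p x = Some y \<and> y \<in> Y \<and> y \<notin> U))" for w U
    unfolding up_map_def down_def by blast
  have umX: "up_map X leX Y p U \<subseteq> X" for U unfolding up_map_def by blast
  have upset: "is_upset X leX (up_map X leX Y p U)" for U
    unfolding is_upset_def
  proof (intro conjI ballI impI)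
    show "up_map X leX Y p U \<subseteq> X" unfolding up_map_def by blast
    fix u x assume u: "u \<in> up_map X leX Y p U" and x: "x \<in> X" "leX u x"
    show "x \<in> up_map X leX Y p U"
      using u x trX unfolding um by blast
  qed
  have meet: "up_map X leX Y p (U \<inter> V) = up_map X leX Y p U \<inter> up_map X leX Y p V" for U V
    unfolding up_map_def down_def by blast
  have zero: "up_map X leX Y p {} = {}"
  proof -
    have "w \<notin> up_map X leX Y p {}" for w
    proof
      assume w: "w \<in> up_map X leX Y p {}"
      then have "w \<in> X" unfolding um by blast
      then obtain x0 where x0: "x0 \<in> X" "leX w x0" "\<forall>x'\<in>X. leX x0 x' \<longrightarrow> x' \<in> dom p" using ex4 by blast
      then have "x0 \<in> dom p" using rfX by blast
      then obtain y where "p x0 = Some y" by blast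
      moreover have "y \<in> Y" using pY \<open>x0 \<in> dom p\<close> calculation by (metis option.sel)
      ultimately show False using w x0 unfolding um by blast
    qed
    then show ?thesis by blast
  qed
  have one: "up_map X leX Y p Y = X" unfolding up_map_def down_def by blast
  have neg: "up_map X leX Y p (Y - down Y leY U) = X - down X leX (up_map X leX Y p U)"
    if U: "is_upset Y leY U" for U
  proof
    show "up_map X leX Y p (Y - down Y leY U) \<subseteq> X - down X leX (up_map X leX Y p U)"
    proof
      fix w assume w: "w \<in> up_map X leX Y p (Y - down Y leY U)"
      then have wX: "w \<in> X" unfolding um by blast
      have "w \<notin> down X leX (up_map X leX Y p U)"
      proof
        assume "w \<in> down X leX (up_map X leX Y p U)"
        then obtain x where x: "x \<in> X" "leX w x" "x \<in> up_map X leX Y p U" using umX unfolding down_def by blast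
        obtain x0 where x0: "x0 \<in> X" "leX x x0" "\<forall>x'\<in>X. leX x0 x' \<longrightarrow> x' \<in> dom p" using ex4[OF x(1)] by blast
        then have "x0 \<in> dom p" using rfX by blast
        then obtain y where y: "p x0 = Some y" by blast
        have yY: "y \<in> Y" using pY \<open>x0 \<in> dom p\<close> y by (metis option.sel)
        show False
        proof (cases "y \<in> U")
          case True
          have "leY y y" using poY yY unfolding is_poset_def by blast
          then have "y \<in> down Y leY U" using True yY unfolding down_def by blast
          moreover have "leX w x0" using trX wX x x0 by blast
          ultimately show False using w x0 y yY unfolding um by blast
        next
          case False
          then show False using x x0 y yY unfolding um by blast
        qed
      qed
      then show "w \<in> X - down X leX (up_map X leX Y p U)" using wX by blast
    qed
  next
    show "X - down X leX (up_map X leX Y p U) \<subseteq> up_map X leX Y p (Y - down Y leY U)"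
    proof
      fix w assume w: "w \<in> X - down X leX (up_map X leX Y p U)"
      then have wX: "w \<in> X" by blast
      have allx: "\<exists>x'\<in>X. leX x x' \<and> (\<exists>y. p x' = Some y \<and> y \<in> Y \<and> y \<notin> U)" if "x \<in> X" "leX w x" for x
      proof (rule ccontr)
        assume "\<not> ?thesis"
        then have "x \<in> up_map X leX Y p U" using that unfolding um by blast
        then have "w \<in> down X leX (up_map X leX Y p U)" using that wX unfolding down_def by blast
        then show False using w by blast
      qed
      show "w \<in> up_map X leX Y p (Y - down Y leY U)"
        unfolding um
      proof (intro conjI notI wX)
        assume "\<exists>x\<in>X. leX w x \<and> (\<exists>y. p x = Some y \<and> y \<in> Y \<and> y \<notin> Y - down Y leY U)"
        then obtain x y where x: "x \<in> X" "leX w x" "p x = Some y" "y \<in> down Y leY U" by blast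
        then obtain u where u: "u \<in> U" "leY y u" unfolding down_def by blast
        have xd: "x \<in> dom p" using x by blast
        have uY: "u \<in> Y" using U u unfolding is_upset_def by blast
        obtain z where z: "z \<in> dom p" "leX x z" "leY u (the (p z))" using c5 xd uY u x by (metis option.sel)
        have zX: "z \<in> X" using z pd by blast
        have pzU: "the (p z) \<in> U" using U u z uY pY unfolding is_upset_def by blast
        obtain x' y' where x': "x' \<in> X" "leX z x'" "p x' = Some y'" "y' \<in> Y" "y' \<notin> U"
          using allx[OF zX] trX wX x z zX by blast
        have "leY (the (p z)) y'" using mono z x' x'(3) by (metis domI option.sel)
        then have "y' \<in> U" using U pzU x' unfolding is_upset_def by blast
        then show False using x' by blast
      qed
    qed
  qed
  show ?thesis
    unfolding psl_hom_def up_psl_def using upset meet zero one neg by simp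
qed

theorem proposition3p9:
  fixes A :: "'a psl" and B :: "'b psl" and f :: "'a \<Rightarrow> 'b"
    and X :: "'x set" and leX :: "'x \<Rightarrow> 'x \<Rightarrow> bool"
    and Y :: "'y set" and leY :: "'y \<Rightarrow> 'y \<Rightarrow> bool"
    and p :: "'x \<Rightarrow> 'y option"
  shows "(is_psl A \<and> is_psl B \<and> psl_hom A B f \<longrightarrow>
            partial_neg_pmorphism (mi_filters B) (\<subseteq>) (mi_filters A) (\<subseteq>) (lower_star A B f))
       \<and> (is_poset X leX \<and> is_poset Y leY \<and> partial_neg_pmorphism X leX Y leY p \<longrightarrow>
            psl_hom (up_psl Y leY) (up_psl X leX) (up_map X leX Y p))"
  using part1 part2 by blast

end
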